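(* Let $n\ge 1$, let $x_1,\dots,x_n$ be distinct integers each greater than $1$, and let $D=\{1,x_1,\dots,x_n\}$. Then $\sigma(D)=2-n+\sum_{i=1}^n x_i$.
   Context: A signed tree is a pair $(T,s)$ where $T$ is a finite tree and $s:E(T)\to\{+,-\}$. The signed degree $sdeg(v)$ of a vertex is the number of incident positive edges minus the number of incident negative edges. $(T,s)$ realizes (satisfies) a set $D$ of integers if $D=\{sdeg(v):v\in V(T)\}$. For a set $D$ containing $1$ or $-1$, $\sigma(D)=\min\{|V(T)|: \text{some signed tree }(T,s)\text{ realizes }D\}$. *)

theory Defs
  imports Main
begin

text \<open>A signing is a function from edges to bool
(True = positive edge, False = negative edge).\<close>

definition is_graph :: "nat set \<Rightarrow> nat set set \<Rightarrow> bool" where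
  "is_graph V E \<longleftrightarrow> finite V \<and> (\<forall>e\<in>E. e \<subseteq> V \<and> card e = 2)"

definition adj_rel :: "nat set set \<Rightarrow> (nat \<times> nat) set" where
  "adj_rel E = {(a, b). {a, b} \<in> E}"

definition connected_graph :: "nat set \<Rightarrow> nat set set \<Rightarrow> bool" where
  "connected_graph V E \<longleftrightarrow> (\<forall>u\<in>V. \<forall>v\<in>V. (u, v) \<in> (adj_rel E)\<^sup>*)"

definition is_cycle :: "nat set set \<Rightarrow> nat list \<Rightarrow> bool" where
  "is_cycle E vs \<longleftrightarrow> length vs \<ge> 3 \<and> distinct vs \<and>
     (\<forall>i < length vs. {vs ! i, vs ! ((i + 1) mod length vs)} \<in> E)"

definition acyclic_graph :: "nat set set \<Rightarrow> bool" where
  "acyclic_graph E \<longleftrightarrow> (\<nexists>vs. is_cycle E vs)"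

definition is_tree :: "nat set \<Rightarrow> nat set set \<Rightarrow> bool" where
  "is_tree V E \<longleftrightarrow> is_graph V E \<and> V \<noteq> {} \<and> connected_graph V E \<and> acyclic_graph E"

definition sdeg :: "(nat set \<Rightarrow> bool) \<Rightarrow> nat set set \<Rightarrow> nat \<Rightarrow> int" where
  "sdeg s E v = int (card {e\<in>E. v \<in> e \<and> s e}) - int (card {e\<in>E. v \<in> e \<and> \<not> s e})"

definition realizes :: "nat set \<Rightarrow> nat set set \<Rightarrow> (nat set \<Rightarrow> bool) \<Rightarrow> int set \<Rightarrow> bool" where
  "realizes V E s D \<longleftrightarrow> D = sdeg s E ` V"

definition sigma :: "int set \<Rightarrow> nat" where
  "sigma D = (LEAST k. \<exists>V E s. is_tree V E \<and> realizes V E s D \<and> card V = k)"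

end

theory Submission
  imports Defs
begin

definition dg :: "nat set set \<Rightarrow> nat \<Rightarrow> nat" where
  "dg E v = card {e\<in>E. v \<in> e}"

lemma sdeg_True: "sdeg (\<lambda>_. True) E v = int (dg E v)"
  by (simp add: sdeg_def dg_def)

lemma sdeg_le_dg: assumes "finite E" shows "sdeg s E v \<le> int (dg E v)"
proof -
  have "card {e\<in>E. v \<in> e \<and> s e} \<le> card {e\<in>E. v \<in> e}"
    using assms by (intro card_mono) auto
  then show ?thesis by (simp add: sdeg_def dg_def)
qed

lemma graph_finite_E: assumes "is_graph V E" shows "finite E"
proof -
  have "E \<subseteq> Pow V" using assms by (auto simp: is_graph_def)
  moreover have "finite V" using assms by (simp add: is_graph_def)
  ultimately show ?thesis by (meson finite_Pow_iff finite_subset)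
qed

lemma card_as_sum: "finite E \<Longrightarrow> card {e\<in>E. v \<in> e} = (\<Sum>e\<in>E. if v \<in> e then 1 else 0)"
  by (simp add: sum.If_cases Int_def conj_commute)

lemma card_as_sum2: "finite A \<Longrightarrow> card {a\<in>A. a \<in> e} = (\<Sum>a\<in>A. if a \<in> e then 1 else 0)"
  by (simp add: sum.If_cases Int_def conj_commute)

lemma handshake: assumes g: "is_graph V E"
  shows "(\<Sum>v\<in>V. dg E v) = 2 * card E"
proof -
  have fV: "finite V" using g by (simp add: is_graph_def)
  have fE: "finite E" using graph_finite_E[OF g] .
  have "(\<Sum>v\<in>V. dg E v) = (\<Sum>v\<in>V. \<Sum>e\<in>E. if v \<in> e then 1 else 0)"
    unfolding dg_def by (rule sum.cong) (use card_as_sum[OF fE] in auto)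
  also have "\<dots> = (\<Sum>e\<in>E. \<Sum>v\<in>V. if v \<in> e then 1 else 0)"
    by (rule sum.swap)
  also have "\<dots> = (\<Sum>e\<in>E. 2)"
  proof (rule sum.cong)
    fix e assume e: "e \<in> E"
    have "(\<Sum>v\<in>V. if v \<in> e then 1 else (0::nat)) = card {v\<in>V. v \<in> e}"
      using card_as_sum2[OF fV] by simp
    also have "{v\<in>V. v \<in> e} = e" using g e by (auto simp: is_graph_def)
    also have "card e = 2" using g e by (auto simp: is_graph_def)
    finally show "(\<Sum>v\<in>V. if v \<in> e then 1 else (0::nat)) = 2" .
  qed simp
  finally show ?thesis by simp
qed

definition gpath :: "nat set set \<Rightarrow> nat list \<Rightarrow> bool" where
  "gpath E vs \<longleftrightarrow> distinct vs \<and> (\<forall>i. Suc i < length vs \<longrightarrow> {vs!i, vs!Suc i} \<in> E)"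

lemma leaf_exists:
  assumes g: "is_graph V E" and ac: "acyclic_graph E" and ne: "E \<noteq> {}"
  shows "\<exists>v\<in>V. dg E v \<le> 1"
proof -
  have fV: "finite V" using g by (simp add: is_graph_def)
  let ?P = "\<lambda>vs. gpath E vs \<and> set vs \<subseteq> V \<and> length vs \<ge> 2"
  obtain e where e: "e \<in> E" using ne by blast
  then obtain a b where ab: "e = {a,b}" "a \<noteq> b" using g by (auto simp: is_graph_def card_2_iff)
  have abV: "a \<in> V" "b \<in> V" using g e ab by (auto simp: is_graph_def)
  have P0: "?P [a,b]" using ab e abV by (auto simp: gpath_def less_Suc_eq)
  have bnd: "\<forall>vs. ?P vs \<longrightarrow> length vs \<le> card V"
    using fV by (metis distinct_card card_mono gpath_def)
  obtain vs where vs: "?P vs" and mx: "\<forall>ys. ?P ys \<longrightarrow> length ys \<le> length vs"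
    using ex_has_greatest_nat[of ?P "[a,b]" length "Suc (card V)"] P0 bnd
    by (meson le_imp_less_Suc)
  define v where "v = vs!0"
  have "vs!0 \<in> set vs" using vs by (intro nth_mem) auto
  then have vV: "v \<in> V" using vs by (auto simp: v_def)
  have sub: "{e\<in>E. v \<in> e} \<subseteq> {{v, vs!1}}"
  proof
    fix f assume f: "f \<in> {e\<in>E. v \<in> e}"
    then have fE: "f \<in> E" and vf: "v \<in> f" by auto
    have "card f = 2" using g fE by (auto simp: is_graph_def)
    then obtain w where w: "f = {v,w}" "w \<noteq> v" using vf
      by (metis card_2_iff insert_commute insertE singletonD)
    have wV: "w \<in> V" using g fE w by (auto simp: is_graph_def)
    show "f \<in> {{v, vs!1}}"
    proof (cases "w \<in> set vs")
      case False
      have pw: "\<forall>i. Suc i < length (w#vs) \<longrightarrow> {(w#vs)!i, (w#vs)!Suc i} \<in> E"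
      proof (intro allI impI)
        fix i assume i: "Suc i < length (w#vs)"
        show "{(w#vs)!i, (w#vs)!Suc i} \<in> E"
        proof (cases i)
          case 0 then show ?thesis using fE w by (simp add: v_def insert_commute)
        next
          case (Suc j) then show ?thesis using vs i by (simp add: gpath_def)
        qed
      qed
      have "?P (w#vs)" using pw vs False wV by (auto simp: gpath_def)
      then have "length (w#vs) \<le> length vs" using mx by blast
      then show ?thesis by simp
    next
      case True
      then obtain j where j: "j < length vs" "vs!j = w" by (meson in_set_conv_nth)
      have j0: "j \<noteq> 0" using j w v_def by (metis)
      show ?thesis
      proof (cases "j = 1")
        case True then show ?thesis using j w by auto
      next
        case False
        with j0 have j2: "j \<ge> 2" by auto
        define t where "t = take (Suc j) vs"
        have lt: "length t = Suc j" using j by (simp add: t_def)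
        have "is_cycle E t"
          unfolding is_cycle_def
        proof (intro conjI allI impI)
          show "3 \<le> length t" using lt j2 by simp
          show "distinct t" using vs by (simp add: t_def gpath_def)
          fix i assume i: "i < length t"
          show "{t ! i, t ! ((i + 1) mod length t)} \<in> E"
          proof (cases "i < j")
            case True
            then have "(i+1) mod length t = Suc i" using lt by simp
            then show ?thesis using vs True j by (simp add: t_def gpath_def)
          next
            case False
            then have ij: "i = j" using i lt by simp
            then have "(i+1) mod length t = 0" using lt by simp
            then show ?thesis using ij j fE w by (simp add: t_def v_def insert_commute)
          qed
        qed
        then show ?thesis using ac by (auto simp: acyclic_graph_def)
      qed
    qed
  qed
  have "dg E v \<le> card {{v, vs!1}}" unfolding dg_def by (rule card_mono) (use sub in auto)
  then show ?thesis using vV by auto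
qed

lemma is_cycle_mono: "E \<subseteq> F \<Longrightarrow> is_cycle E vs \<Longrightarrow> is_cycle F vs"
  by (auto simp: is_cycle_def)

lemma forest_edges:
  "is_graph V E \<Longrightarrow> acyclic_graph E \<Longrightarrow> V \<noteq> {} \<Longrightarrow> card E < card V"
proof (induction "card V" arbitrary: V E rule: less_induct)
  case less
  have fE: "finite E" using graph_finite_E less.prems(1) .
  have fV: "finite V" using less.prems by (simp add: is_graph_def)
  show ?case
  proof (cases "E = {}")
    case True then show ?thesis using less.prems fV by (simp add: card_gt_0_iff)
  next
    case False
    obtain v where v: "v \<in> V" "dg E v \<le> 1" using leaf_exists less.prems False by blast
    define V' where "V' = V - {v}"
    define E' where "E' = {e\<in>E. v \<notin> e}"
    have g': "is_graph V' E'" using less.prems(1) by (auto simp: is_graph_def V'_def E'_def)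
    have ac': "acyclic_graph E'" using less.prems(2) is_cycle_mono[of E' E]
      by (auto simp: acyclic_graph_def E'_def)
    obtain e where e: "e \<in> E" using False by blast
    then have "card e = 2" "e \<subseteq> V" using less.prems(1) by (auto simp: is_graph_def)
    then obtain a b where "e = {a,b}" "a \<noteq> b" "a \<in> V" "b \<in> V" by (auto simp: card_2_iff)
    then have ne': "V' \<noteq> {}" by (auto simp: V'_def)
    have cV: "card V' < card V" unfolding V'_def by (rule card_Diff1_less[OF fV v(1)])
    have IH: "card E' < card V'" using less.hyps[OF cV g' ac' ne'] .
    have "E = E' \<union> {e\<in>E. v \<in> e}" by (auto simp: E'_def)
    then have "card E \<le> card E' + card {e\<in>E. v \<in> e}" by (metis card_Un_le)
    also have "\<dots> \<le> card E' + 1" using v by (simp add: dg_def)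
    finally show ?thesis using IH cV by linarith
  qed
qed

lemma add_leaf_tree:
  assumes t: "is_tree V E" and v: "v \<in> V" and w: "w \<notin> V"
  shows "is_tree (insert w V) (insert {v,w} E)"
proof -
  have g: "is_graph V E" and c: "connected_graph V E" and ac: "acyclic_graph E"
    using t by (auto simp: is_tree_def)
  have vw: "v \<noteq> w" using v w by auto
  let ?E = "insert {v,w} E"
  have g': "is_graph (insert w V) ?E" using g v vw by (auto simp: is_graph_def)
  let ?R = "adj_rel ?E"
  have sub: "adj_rel E \<subseteq> ?R" by (auto simp: adj_rel_def)
  have old: "(a,b) \<in> ?R\<^sup>*" if "a \<in> V" "b \<in> V" for a b
    using c that rtrancl_mono[OF sub] by (auto simp: connected_graph_def)
  have e1: "(v,w) \<in> ?R" and e2: "(w,v) \<in> ?R" by (auto simp: adj_rel_def insert_commute)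
  have c': "connected_graph (insert w V) ?E"
    unfolding connected_graph_def
  proof (intro ballI)
    fix a b assume a: "a \<in> insert w V" and b: "b \<in> insert w V"
    show "(a,b) \<in> ?R\<^sup>*"
    proof (cases "a = w")
      case True
      show ?thesis
      proof (cases "b = w")
        case True then show ?thesis using \<open>a = w\<close> by simp
      next
        case False
        then have "(v,b) \<in> ?R\<^sup>*" using b v old by auto
        then show ?thesis using e2 \<open>a = w\<close> by (meson converse_rtrancl_into_rtrancl)
      qed
    next
      case False
      then have aV: "a \<in> V" using a by auto
      show ?thesis
      proof (cases "b = w")
        case True
        have "(a,v) \<in> ?R\<^sup>*" using aV v old by auto
        then show ?thesis using e1 True by (meson rtrancl_into_rtrancl)
      next
        case False
        then show ?thesis using aV b old by auto
      qed
    qed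
  qed
  have wE: "w \<notin> e" if "e \<in> E" for e using g w that by (auto simp: is_graph_def)
  have ac': "acyclic_graph ?E"
    unfolding acyclic_graph_def
  proof
    assume "\<exists>vs. is_cycle ?E vs"
    then obtain vs where cy: "is_cycle ?E vs" by blast
    define L where "L = length vs"
    have L3: "L \<ge> 3" and dvs: "distinct vs"
      and ed: "\<And>i. i < L \<Longrightarrow> {vs ! i, vs ! ((i + 1) mod L)} \<in> ?E"
      using cy by (auto simp: is_cycle_def L_def)
    show False
    proof (cases "w \<in> set vs")
      case False
      have "is_cycle E vs" unfolding is_cycle_def
      proof (intro conjI allI impI)
        show "3 \<le> length vs" "distinct vs" using L3 dvs by (auto simp: L_def)
        fix i assume i: "i < length vs"
        have m: "(i+1) mod L < L" using L3 by simp
        have "vs ! i \<noteq> w" "vs ! ((i + 1) mod L) \<noteq> w"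
          using False i m nth_mem[of i vs] nth_mem[of "(i+1) mod L" vs] by (auto simp: L_def)
        then have "{vs ! i, vs ! ((i + 1) mod L)} \<noteq> {v,w}" by (auto simp: doubleton_eq_iff)
        then show "{vs ! i, vs ! ((i + 1) mod length vs)} \<in> E" using ed[of i] i by (auto simp: L_def)
      qed
      then show False using ac by (auto simp: acyclic_graph_def)
    next
      case True
      then obtain i where i: "i < L" "vs ! i = w" by (auto simp: L_def in_set_conv_nth)
      define a where "a = (if i + 1 = L then 0 else i + 1)"
      define j where "j = (if i = 0 then L - 1 else i - 1)"
      have am: "(i+1) mod L = a" using i by (auto simp: a_def)
      have jm: "(j+1) mod L = i" using i L3 by (auto simp: j_def)
      have aL: "a < L" and jL: "j < L" using i L3 by (auto simp: a_def j_def)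
      have aj: "a \<noteq> j" using i L3 by (auto simp: a_def j_def)
      have "{w, vs ! a} \<in> ?E" using ed[of i] i am by simp
      then have "{w, vs ! a} = {v,w}" using wE by auto
      then have va: "vs ! a = v" using vw by (auto simp: doubleton_eq_iff)
      have "{vs ! j, w} \<in> ?E" using ed[of j] jL jm i by simp
      then have "{vs ! j, w} = {v,w}" using wE by auto
      then have vj: "vs ! j = v" using vw by (auto simp: doubleton_eq_iff)
      have "vs ! a = vs ! j" using va vj by simp
      then have "a = j" using dvs aL jL by (simp add: L_def nth_eq_iff_index_eq)
      then show False using aj by simp
    qed
  qed
  show ?thesis using g' c' ac' by (simp add: is_tree_def)
qed

lemma single_tree: "is_tree {0} {}"
  by (auto simp: is_tree_def is_graph_def connected_graph_def acyclic_graph_def is_cycle_def)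
    (rule exI[of _ 0], auto)

lemma dg_insert:
  assumes "finite E" "f \<notin> E"
  shows "dg (insert f E) u = dg E u + (if u \<in> f then 1 else 0)"
proof -
  have "{e\<in>insert f E. u \<in> e} = (if u \<in> f then insert f {e\<in>E. u \<in> e} else {e\<in>E. u \<in> e})" by auto
  then show ?thesis using assms by (simp add: dg_def)
qed

lemma add_leaves:
  assumes "is_tree {0..<N} E" "l < N"
  shows "\<exists>E'. is_tree {0..<N+m} E' \<and> dg E' l = dg E l + m \<and>
     (\<forall>u<N. u \<noteq> l \<longrightarrow> dg E' u = dg E u) \<and> (\<forall>u. N \<le> u \<and> u < N+m \<longrightarrow> dg E' u = 1)"
proof (induction m)
  case 0 then show ?case using assms by auto
next
  case (Suc m)
  then obtain E' where E': "is_tree {0..<N+m} E'" "dg E' l = dg E l + m"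
    "\<forall>u<N. u \<noteq> l \<longrightarrow> dg E' u = dg E u" "\<forall>u. N \<le> u \<and> u < N+m \<longrightarrow> dg E' u = 1" by blast
  let ?w = "N+m"
  have t: "is_tree (insert ?w {0..<N+m}) (insert {l,?w} E')"
    by (rule add_leaf_tree) (use E'(1) assms(2) in auto)
  have ins: "insert ?w {0..<N+m} = {0..<N + Suc m}" by auto
  have g: "is_graph {0..<N+m} E'" using E'(1) by (simp add: is_tree_def)
  have fE: "finite E'" using graph_finite_E[OF g] .
  have nin: "{l,?w} \<notin> E'" using g by (auto simp: is_graph_def)
  have "{e\<in>E'. ?w \<in> e} = {}" using g by (auto simp: is_graph_def)
    (meson atLeastLessThan_iff less_irrefl subsetD)
  then have d0: "dg E' ?w = 0" unfolding dg_def by (metis card.empty)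
  have t': "is_tree {0..<N + Suc m} (insert {l,?w} E')" using t ins by simp
  show ?case
  proof (intro exI conjI allI impI)
    show "is_tree {0..<N + Suc m} (insert {l,?w} E')" by (rule t')
    show "dg (insert {l,?w} E') l = dg E l + Suc m"
      using E'(2) by (simp add: dg_insert[OF fE nin])
    fix u
    show "u < N \<Longrightarrow> u \<noteq> l \<Longrightarrow> dg (insert {l,?w} E') u = dg E u"
      using E'(3) by (simp add: dg_insert[OF fE nin])
    assume u: "N \<le> u \<and> u < N + Suc m"
    show "dg (insert {l,?w} E') u = 1"
    proof (cases "u = ?w")
      case True then show ?thesis using d0 by (simp add: dg_insert[OF fE nin])
    next
      case False then show ?thesis using u E'(4) assms(2) by (simp add: dg_insert[OF fE nin])
    qed
  qed
qed

lemma build: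
  assumes "\<forall>i\<in>{1..k}. x i > (1::int)"
  shows "\<exists>N E l. is_tree {0..<N} E \<and> l < N \<and> dg E l = 1 \<and>
     (\<lambda>v. int (dg E v)) ` {0..<N} = insert 1 (x ` {1..k}) \<and> int N = 2 - int k + (\<Sum>i=1..k. x i)"
  using assms
proof (induction k)
  case 0
  have t: "is_tree (insert 1 {0}) (insert {0,1} {})"
    by (rule add_leaf_tree[OF single_tree]) auto
  have eq: "insert 1 {0} = {0..<(2::nat)}" by auto
  have d: "dg {{0,1}} v = (if v \<in> {0,1} then 1 else 0)" for v
    using dg_insert[of "{}" "{0,1}" v] by (simp add: dg_def)
  have img: "(\<lambda>v. int (dg {{0,1}} v)) ` {0..<2} = {1}" using d by auto
  show ?case
    by (rule exI[of _ 2], rule exI[of _ "{{0,1}}"], rule exI[of _ 1]) (use t eq d img in auto)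
next
  case (Suc k)
  then obtain N E l where NE: "is_tree {0..<N} E" "l < N" "dg E l = 1"
     "(\<lambda>v. int (dg E v)) ` {0..<N} = insert 1 (x ` {1..k})" "int N = 2 - int k + (\<Sum>i=1..k. x i)"
    by auto
  have xs: "x (Suc k) > 1" using Suc.prems by auto
  define m where "m = nat (x (Suc k) - 1)"
  have m1: "m \<ge> 1" and mx: "int m = x (Suc k) - 1" using xs by (auto simp: m_def)
  obtain E' where E': "is_tree {0..<N+m} E'" "dg E' l = dg E l + m"
     "\<forall>u<N. u \<noteq> l \<longrightarrow> dg E' u = dg E u" "\<forall>u. N \<le> u \<and> u < N+m \<longrightarrow> dg E' u = 1"
    using add_leaves[OF NE(1) NE(2)] by blast
  define f' where "f' = (\<lambda>v. int (dg E' v))"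
  define f where "f = (\<lambda>v. int (dg E v))"
  have split: "{0..<N+m} = insert l (({0..<N} - {l}) \<union> {N..<N+m})" using NE(2) by auto
  have i1: "f' ` ({0..<N} - {l}) = f ` ({0..<N} - {l})"
    using E'(3) by (auto simp: f'_def f_def intro!: image_cong)
  have i2: "f' ` {N..<N+m} = {1}" using E'(4) m1 by (auto simp: f'_def image_iff) (rule exI[of _ N], simp)
  have i3: "f' l = x (Suc k)" using E'(2) NE(3) mx by (simp add: f'_def)
  have i4: "f ` ({0..<N} - {l}) \<union> {1} = insert 1 (x ` {1..k})"
  proof -
    have "f ` {0..<N} = insert (f l) (f ` ({0..<N} - {l}))" using NE(2) by (metis atLeastLessThan_iff image_insert insert_Diff le0)
    then show ?thesis using NE(3,4) by (auto simp: f_def)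
  qed
  have img: "f' ` {0..<N+m} = insert 1 (x ` {1..Suc k})"
  proof -
    have "f' ` {0..<N+m} = insert (f' l) (f' ` ({0..<N} - {l}) \<union> f' ` {N..<N+m})"
      by (subst split) (simp add: image_Un)
    also have "\<dots> = insert (x (Suc k)) (f ` ({0..<N} - {l}) \<union> {1})" using i1 i2 i3 by simp
    also have "\<dots> = insert (x (Suc k)) (insert 1 (x ` {1..k}))" using i4 by simp
    also have "\<dots> = insert 1 (x ` {1..Suc k})" by (auto simp: atLeastAtMostSuc_conv)
    finally show ?thesis .
  qed
  have cnt: "int (N+m) = 2 - int (Suc k) + (\<Sum>i=1..Suc k. x i)"
    using NE(5) mx by (simp add: sum.cl_ivl_Suc)
  show ?case
    by (rule exI[of _ "N+m"], rule exI[of _ E'], rule exI[of _ N])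
       (use E' m1 img cnt in \<open>auto simp: f'_def\<close>)
qed

lemma lower:
  assumes t: "is_tree V E" and r: "realizes V E s D"
    and x: "inj_on x {1..n}" "\<forall>i\<in>{1..n}. x i > 1" and D: "D = insert 1 (x ` {1..n})"
  shows "2 - int n + (\<Sum>i=1..n. x i) \<le> int (card V)"
proof -
  have g: "is_graph V E" and ac: "acyclic_graph E" and ne: "V \<noteq> {}" using t by (auto simp: is_tree_def)
  have fV: "finite V" using g by (simp add: is_graph_def)
  have fE: "finite E" using graph_finite_E[OF g] .
  have Dimg: "D = sdeg s E ` V" using r by (simp add: realizes_def)
  have pos: "sdeg s E v \<ge> 1" if "v \<in> V" for v
  proof -
    have "sdeg s E v \<in> D" using Dimg that by auto
    then show ?thesis using D x(2) by fastforce
  qed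
  have "\<forall>i\<in>{1..n}. \<exists>u\<in>V. sdeg s E u = x i" using Dimg D by (metis imageE insertCI image_eqI)
  then obtain u where u: "\<And>i. i\<in>{1..n} \<Longrightarrow> u i \<in> V \<and> sdeg s E (u i) = x i" by metis
  have inj: "inj_on u {1..n}" using x(1) u unfolding inj_on_def by metis
  define U where "U = u ` {1..n}"
  have UV: "U \<subseteq> V" using u by (auto simp: U_def)
  have cU: "card U = n" using card_image[OF inj] by (simp add: U_def)
  have nV: "n \<le> card V" using card_mono[OF fV UV] cU by simp
  have sU: "(\<Sum>v\<in>U. sdeg s E v) = (\<Sum>i=1..n. x i)"
    unfolding U_def using sum.reindex[OF inj, of "sdeg s E"] u by simp
  have sR: "(\<Sum>v\<in>V-U. sdeg s E v) \<ge> (\<Sum>v\<in>V-U. 1)" using pos by (intro sum_mono) auto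
  have cVU: "card (V-U) = card V - n" using card_Diff_subset[OF finite_subset[OF UV fV] UV] cU by simp
  have tot: "(\<Sum>v\<in>V. sdeg s E v) = (\<Sum>v\<in>V-U. sdeg s E v) + (\<Sum>v\<in>U. sdeg s E v)"
    using sum.subset_diff[OF UV fV] .
  have "(\<Sum>v\<in>V. sdeg s E v) \<le> (\<Sum>v\<in>V. int (dg E v))" using sdeg_le_dg[OF fE] by (intro sum_mono) auto
  also have "\<dots> = int (2 * card E)" using handshake[OF g] by (metis of_nat_sum)
  finally have up: "(\<Sum>v\<in>V. sdeg s E v) \<le> 2 * int (card E)" by simp
  have ce: "card E < card V" using forest_edges[OF g ac ne] .
  show ?thesis using tot sU sR cVU nV up ce by simp
qed

theorem mainTheorem8:
  fixes n :: nat and x :: "nat \<Rightarrow> int" and D :: "int set"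
  assumes "n \<ge> 1"
    and "inj_on x {1..n}"
    and "\<forall>i\<in>{1..n}. x i > 1"
    and "D = insert 1 (x ` {1..n})"
  shows "int (sigma D) = 2 - int n + (\<Sum>i=1..n. x i)"
proof -
  obtain N E l where NE: "is_tree {0..<N} E"
     "(\<lambda>v. int (dg E v)) ` {0..<N} = insert 1 (x ` {1..n})" "int N = 2 - int n + (\<Sum>i=1..n. x i)"
    using build[OF assms(3)] by blast
  have re: "realizes {0..<N} E (\<lambda>_. True) D"
    using NE(2) assms(4) by (simp add: realizes_def sdeg_True)
  have "sigma D = N" unfolding sigma_def
  proof (rule Least_equality)
    show "\<exists>V E s. is_tree V E \<and> realizes V E s D \<and> card V = N"
      using NE(1) re by fastforce
    fix k assume "\<exists>V E s. is_tree V E \<and> realizes V E s D \<and> card V = k"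
    then obtain V E' s where "is_tree V E'" "realizes V E' s D" "card V = k" by blast
    then show "N \<le> k" using lower[OF _ _ assms(2,3,4)] NE(3) by fastforce
  qed
  then show ?thesis using NE(3) by simp
qed

end
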